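(* If $r \in \mathbb{Q}_{>1} \setminus \mathbb{N}$, then the set of elasticities $R(S_r)$ is dense in $\mathbb{R}_{\ge 1}$.
   Context: $S_r$ is the additive submonoid of $(\mathbb{Q}_{\ge 0},+)$ generated by $\{r^n : n \in \mathbb{N}_0\}$; for $r \in \mathbb{Q}_{>1}\setminus\mathbb{N}$ it is atomic with atoms $r^n$, $n \in \mathbb{N}_0$. $\mathsf{L}(x)$ denotes the set of lengths of factorizations of $x$ into atoms. The elasticity of $x \ne 0$ is $\rho(x) = \sup \mathsf{L}(x)/\inf \mathsf{L}(x)$, $\rho(0)=1$, and $R(S_r) = \{\rho(x) : x \in S_r\}$. *)

theory Defs
  imports "HOL-Analysis.Analysis" "HOL-Library.Multiset"
begin

inductive_set Sr :: "rat \<Rightarrow> rat set" for r :: rat where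
  zero: "0 \<in> Sr r"
| pow: "r ^ n \<in> Sr r"
| add: "x \<in> Sr r \<Longrightarrow> y \<in> Sr r \<Longrightarrow> x + y \<in> Sr r"

definition atoms :: "rat set \<Rightarrow> rat set" where
  "atoms M = {a \<in> M. a \<noteq> 0 \<and> (\<forall>b\<in>M. \<forall>c\<in>M. a = b + c \<longrightarrow> b = 0 \<or> c = 0)}"

definition factorizations :: "rat set \<Rightarrow> rat \<Rightarrow> rat multiset set" where
  "factorizations M x = {F. set_mset F \<subseteq> atoms M \<and> sum_mset F = x}"

definition lengths :: "rat set \<Rightarrow> rat \<Rightarrow> nat set" where
  "lengths M x = size ` factorizations M x"

definition elasticity :: "rat set \<Rightarrow> rat \<Rightarrow> real" where
  "elasticity M x = (if x = 0 then 1
     else real (Sup (lengths M x)) / real (Inf (lengths M x)))"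

definition elasticity_set :: "rat set \<Rightarrow> real set" where
  "elasticity_set M = elasticity M ` M"

end

theory Submission
  imports Defs "HOL-Number_Theory.Cong"
begin


definition W :: "nat \<Rightarrow> nat \<Rightarrow> nat \<Rightarrow> (nat \<Rightarrow> nat) \<Rightarrow> nat" where
  "W p q N c = (\<Sum>i\<le>N. c i * (p^i * q^(N-i)))"

lemma W_Suc_shift: "W p q (Suc n) c = c 0 * q^(Suc n) + p * W p q n (\<lambda>i. c (Suc i))"
  unfolding W_def sum.atMost_Suc_shift by (simp add: sum_distrib_left mult_ac)

lemma W_Suc_top: "W p q (Suc n) c = q * W p q n c + c (Suc n) * p^(Suc n)"
proof -
  have "(\<Sum>i\<le>n. c i * (p^i * q^(Suc n-i))) = q * (\<Sum>i\<le>n. c i * (p^i * q^(n-i)))"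
    by (simp add: sum_distrib_left Suc_diff_le mult_ac)
  then show ?thesis unfolding W_def by (simp add: sum.atMost_Suc)
qed

lemma W_add_delta: "W p q n (\<lambda>i. f i + (if i = j then a else 0)) = W p q n f + (if j \<le> n then a * (p^j * q^(n-j)) else 0)"
proof -
  have "\<And>i. (f i + (if i = j then a else 0)) * (p^i * q^(n-i)) = f i * (p^i * q^(n-i)) + (if i = j then a * (p^j * q^(n-j)) else 0)"
    by (simp add: distrib_right)
  then show ?thesis unfolding W_def by (simp only: sum.distrib sum.delta[of "{..n}" j "\<lambda>_. a * (p^j * q^(n-j))"] finite_atMost atMost_iff)
qed

lemma sum_add_delta: "(\<Sum>i\<le>(n::nat). f i + (if i = j then (a::nat) else 0)) = (\<Sum>i\<le>n. f i) + (if j \<le> n then a else 0)"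
  by (simp only: sum.distrib sum.delta[of "{..n}" j "\<lambda>_. a"] finite_atMost atMost_iff)

lemma min_core:
  assumes cop: "coprime p q" and qp: "q < p"
  shows "W p q N c = W p q N d \<Longrightarrow> (\<forall>i\<le>N. d i < p) \<Longrightarrow> (\<Sum>i\<le>N. d i) \<le> (\<Sum>i\<le>N. c i)"
proof (induction N arbitrary: c d)
  case 0
  then show ?case by (simp add: W_def)
next
  case (Suc n)
  define X where "X = W p q n (\<lambda>i. c (Suc i))"
  define Y where "Y = W p q n (\<lambda>i. d (Suc i))"
  have e: "c 0 * q^(Suc n) + p * X = d 0 * q^(Suc n) + p * Y"
    using Suc.prems(1) by (simp add: W_Suc_shift X_def Y_def)
  have "[c 0 * q^(Suc n) = d 0 * q^(Suc n)] (mod p)"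
  proof -
    have "[c 0 * q^(Suc n) + p * X = d 0 * q^(Suc n) + p * Y] (mod p)" using e by simp
    then show ?thesis by (simp add: cong_def)
  qed
  moreover have "coprime (q^(Suc n)) p" using cop by (simp add: coprime_commute)
  ultimately have "[c 0 = d 0] (mod p)" using cong_mult_rcancel_nat by blast
  then have "c 0 mod p = d 0" using Suc.prems(2) by (simp add: cong_def)
  then obtain k where ck: "c 0 = d 0 + k * p"
    by (metis mod_mult_div_eq add.commute mult.commute)
  have "k * q^(Suc n) + X = Y"
  proof -
    have "p * (k * q^(Suc n) + X) = p * Y" using e ck by (simp add: algebra_simps)
    then show ?thesis using qp by simp
  qed
  define c' where "c' = (\<lambda>i. c (Suc i) + (if i = 0 then k * q else 0))"
  have "W p q n c' = W p q n (\<lambda>i. d (Suc i))"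
    unfolding c'_def W_add_delta using \<open>k * q^(Suc n) + X = Y\<close> by (simp add: X_def Y_def mult_ac)
  then have "(\<Sum>i\<le>n. d (Suc i)) \<le> (\<Sum>i\<le>n. c' i)"
    using Suc.IH[of c' "\<lambda>i. d (Suc i)"] Suc.prems(2) by simp
  also have "\<dots> = (\<Sum>i\<le>n. c (Suc i)) + k * q" unfolding c'_def sum_add_delta by simp
  finally have "(\<Sum>i\<le>n. d (Suc i)) \<le> (\<Sum>i\<le>n. c (Suc i)) + k * q" .
  moreover have "k * q \<le> k * p" using qp by simp
  ultimately show ?case using ck unfolding sum.atMost_Suc_shift by linarith
qed

lemma max_core:
  assumes cop: "coprime p q" and qp: "q < p" and q0: "0 < q"
  shows "W p q N c = W p q N d \<Longrightarrow> (\<forall>i. 1 \<le> i \<longrightarrow> i \<le> N \<longrightarrow> d i < q) \<Longrightarrow> (\<Sum>i\<le>N. c i) \<le> (\<Sum>i\<le>N. d i)"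
proof (induction N arbitrary: c d)
  case 0
  then show ?case by (simp add: W_def)
next
  case (Suc n)
  define X where "X = W p q n c"
  define Y where "Y = W p q n d"
  define P where "P = p^(Suc n)"
  have e: "q * X + c (Suc n) * P = q * Y + d (Suc n) * P"
    using Suc.prems(1) by (simp add: W_Suc_top X_def Y_def P_def)
  have "[c (Suc n) * P = d (Suc n) * P] (mod q)"
  proof -
    have "[q * X + c (Suc n) * P = q * Y + d (Suc n) * P] (mod q)" using e by simp
    then show ?thesis by (simp add: cong_def)
  qed
  moreover have "coprime P q" using cop by (simp add: P_def)
  ultimately have "[c (Suc n) = d (Suc n)] (mod q)" using cong_mult_rcancel_nat by blast
  then have "c (Suc n) mod q = d (Suc n)" using Suc.prems(2) by (simp add: cong_def)
  then obtain k where ck: "c (Suc n) = d (Suc n) + k * q"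
    by (metis mod_mult_div_eq add.commute mult.commute)
  have "X + k * P = Y"
  proof -
    have "q * (X + k * P) = q * Y" using e ck by (simp add: algebra_simps)
    then show ?thesis using q0 by simp
  qed
  define c' where "c' = (\<lambda>i. c i + (if i = n then k * p else 0))"
  have "W p q n c' = W p q n d"
    unfolding c'_def W_add_delta using \<open>X + k * P = Y\<close> by (simp add: X_def Y_def P_def mult_ac)
  then have "(\<Sum>i\<le>n. c' i) \<le> (\<Sum>i\<le>n. d i)"
    using Suc.IH[of c' d] Suc.prems(2) by simp
  moreover have "(\<Sum>i\<le>n. c' i) = (\<Sum>i\<le>n. c i) + k * p" unfolding c'_def sum_add_delta by simp
  moreover have "k * q \<le> k * p" using qp by simp
  ultimately show ?case using ck unfolding sum.atMost_Suc by linarith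
qed



locale geo =
  fixes p q :: nat
  assumes cop: "coprime p q" and q2: "2 \<le> q" and qp: "q < p"
begin

definition rr :: rat where "rr = of_nat p / of_nat q"
definition val :: "nat multiset \<Rightarrow> rat" where "val E = sum_mset (image_mset (\<lambda>i. rr^i) E)"

lemma q0: "(0::rat) < of_nat q" using q2 by simp
lemma rr_q: "rr * of_nat q = of_nat p" using q0 unfolding rr_def by simp
lemma rr_gt1: "1 < rr" using qp q2 unfolding rr_def by simp

lemma val_empty[simp]: "val {#} = 0" by (simp add: val_def)
lemma val_add_mset[simp]: "val (add_mset x E) = rr^x + val E" by (simp add: val_def)
lemma val_union[simp]: "val (E + F) = val E + val F" by (simp add: val_def)
lemma val_replicate[simp]: "val (replicate_mset k i) = of_nat k * rr^i" by (induction k) (auto simp: algebra_simps)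

lemma val_nonneg: "0 \<le> val E"
  by (induction E) (use rr_gt1 in auto)

lemma val_ge1: "E \<noteq> {#} \<Longrightarrow> 1 \<le> val E"
proof -
  assume "E \<noteq> {#}"
  then obtain x F where "E = add_mset x F" by (metis multiset_cases)
  moreover have "1 \<le> rr^x" using rr_gt1 by simp
  ultimately show ?thesis using val_nonneg[of F] by simp
qed

lemma count_add_mset_delta: "count (add_mset x E) = (\<lambda>i. count E i + (if i = x then 1 else 0))"
  by auto

lemma W_val: "set_mset E \<subseteq> {..N} \<Longrightarrow> of_nat (W p q N (count E)) = val E * of_nat q ^ N"
proof (induction E)
  case empty
  then show ?case by (simp add: W_def)
next
  case (add x E)
  have xN: "x \<le> N" using add.prems by simp
  have "rr^x * of_nat q ^ N = of_nat (p^x * q^(N-x))"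
  proof -
    have "of_nat q ^ N = (of_nat q ^ x * of_nat q^(N-x) :: rat)" using xN by (simp add: power_add[symmetric])
    moreover have "rr^x * of_nat q ^ x = of_nat p ^ x" using rr_q by (simp add: power_mult_distrib[symmetric])
    ultimately show ?thesis by (simp add: mult.assoc[symmetric])
  qed
  then show ?case using add xN
    by (simp add: count_add_mset_delta W_add_delta distrib_right)
qed

lemma size_sum: "set_mset (E::nat multiset) \<subseteq> {..N} \<Longrightarrow> size E = (\<Sum>i\<le>N. count E i)"
proof (induction E)
  case empty then show ?case by simp
next
  case (add x E)
  have xN: "x \<le> N" using add.prems by simp
  have "(\<Sum>i\<le>N. count E i + (if i = x then 1 else 0)) = (\<Sum>i\<le>N. count E i) + 1"
    using sum_add_delta[where f="count E" and j=x and a=1 and n=N] xN by simp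
  then show ?case using add by (simp add: count_add_mset_delta)
qed

lemma common_bound: "\<exists>N. set_mset (E::nat multiset) \<subseteq> {..N} \<and> set_mset (G::nat multiset) \<subseteq> {..N}"
proof -
  define N where "N = Max (set_mset E \<union> set_mset G)"
  have "\<And>x. x \<in> set_mset E \<union> set_mset G \<Longrightarrow> x \<le> N" unfolding N_def by (rule Max_ge) simp_all
  then show ?thesis by blast
qed

lemma W_eq: assumes "val E = val G" "set_mset E \<subseteq> {..N}" "set_mset G \<subseteq> {..N}"
  shows "W p q N (count E) = W p q N (count G)"
proof -
  have "(of_nat (W p q N (count E)) :: rat) = of_nat (W p q N (count G))"
    using W_val[OF assms(2)] W_val[OF assms(3)] assms(1) by simp
  then show ?thesis by simp
qed

lemma min_mset: assumes "val E = val G" "\<forall>i. count G i < p" shows "size G \<le> size E"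
proof -
  obtain N where N: "set_mset E \<subseteq> {..N}" "set_mset G \<subseteq> {..N}" using common_bound by blast
  have "(\<Sum>i\<le>N. count G i) \<le> (\<Sum>i\<le>N. count E i)"
    using min_core[OF cop qp W_eq[OF assms(1) N]] assms(2) by simp
  then show ?thesis using size_sum[OF N(1)] size_sum[OF N(2)] by simp
qed

lemma max_mset: assumes "val E = val G" "\<forall>i. 1 \<le> i \<longrightarrow> count G i < q" shows "size E \<le> size G"
proof -
  obtain N where N: "set_mset E \<subseteq> {..N}" "set_mset G \<subseteq> {..N}" using common_bound by blast
  have "(\<Sum>i\<le>N. count E i) \<le> (\<Sum>i\<le>N. count G i)"
    using max_core[OF cop qp _ W_eq[OF assms(1) N]] assms(2) q2 by simp
  then show ?thesis using size_sum[OF N(1)] size_sum[OF N(2)] by simp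
qed

lemma Sr_val: "x \<in> Sr rr \<Longrightarrow> \<exists>E. x = val E"
proof (induction rule: Sr.induct)
  case zero then show ?case by (rule exI[of _ "{#}"]) simp
next
  case (pow n) then show ?case by (rule exI[of _ "{#n#}"]) simp
next
  case (add x y)
  then obtain E F where "x = val E" "y = val F" by blast
  then have "x + y = val (E + F)" by simp
  then show ?case by blast
qed

lemma val_Sr: "val E \<in> Sr rr"
proof (induction E)
  case empty then show ?case by (simp add: Sr.zero)
next
  case (add x E) then show ?case by (simp add: Sr.add Sr.pow)
qed

lemma atoms_eq: "atoms (Sr rr) = range (\<lambda>n. rr^n)"
proof
  show "atoms (Sr rr) \<subseteq> range (\<lambda>n. rr^n)"
  proof
    fix a assume a: "a \<in> atoms (Sr rr)"
    have aS: "a \<in> Sr rr" using a unfolding atoms_def by simp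
    obtain E where E: "a = val E" using Sr_val[OF aS] by blast
    have a0: "a \<noteq> 0" and asp: "\<forall>b\<in>Sr rr. \<forall>c\<in>Sr rr. a = b + c \<longrightarrow> b = 0 \<or> c = 0"
      using a unfolding atoms_def by simp_all
    have "E \<noteq> {#}" using a0 E by auto
    then obtain x F where EF: "E = add_mset x F" by (cases E) auto
    have "F = {#}"
    proof (rule ccontr)
      assume "F \<noteq> {#}"
      then have "val F \<noteq> 0" using val_ge1[of F] by simp
      moreover have "rr^x \<noteq> 0" using rr_gt1 by simp
      moreover have "rr^x \<in> Sr rr" "val F \<in> Sr rr" by (rule Sr.pow, rule val_Sr)
      moreover have "a = rr^x + val F" using E EF by simp
      ultimately have "rr^x = 0 \<or> val F = 0" using asp by blast
      then show False using \<open>rr^x \<noteq> 0\<close> \<open>val F \<noteq> 0\<close> by blast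
    qed
    then show "a \<in> range (\<lambda>n. rr^n)" using E EF by simp
  qed
next
  show "range (\<lambda>n. rr^n) \<subseteq> atoms (Sr rr)"
  proof
    fix a assume "a \<in> range (\<lambda>n. rr^n)"
    then obtain n where an: "a = rr^n" by blast
    have "\<forall>b\<in>Sr rr. \<forall>c\<in>Sr rr. a = b + c \<longrightarrow> b = 0 \<or> c = 0"
    proof (intro ballI impI)
      fix b c assume "b \<in> Sr rr" "c \<in> Sr rr" "a = b + c"
      obtain B where B: "b = val B" using Sr_val[OF \<open>b \<in> Sr rr\<close>] by blast
      obtain C where C: "c = val C" using Sr_val[OF \<open>c \<in> Sr rr\<close>] by blast
      note BC = B C
      have "val (B + C) = val {#n#}" using BC \<open>a = b + c\<close> an by simp
      moreover have "\<forall>i. 1 \<le> i \<longrightarrow> count {#n#} i < q" using q2 by simp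
      ultimately have "size (B + C) \<le> size {#n#}" by (rule max_mset)
      then have "B = {#} \<or> C = {#}" by (cases B; cases C) auto
      then show "b = 0 \<or> c = 0" using BC by auto
    qed
    moreover have "a \<noteq> 0" using an rr_gt1 by simp
    moreover have "a \<in> Sr rr" using an by (simp add: Sr.pow)
    ultimately show "a \<in> atoms (Sr rr)" unfolding atoms_def by blast
  qed
qed

lemma mset_from_range: "set_mset F \<subseteq> range f \<Longrightarrow> \<exists>E. F = image_mset f E"
proof (induction F)
  case empty then show ?case by simp
next
  case (add x F)
  then obtain E where "F = image_mset f E" by auto
  moreover obtain n where "x = f n" using add.prems by auto
  ultimately have "add_mset x F = image_mset f (add_mset n E)" by simp
  then show ?case by blast
qed

lemma lengths_eq: "lengths (Sr rr) x = {size E | E. val E = x}"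
proof
  show "lengths (Sr rr) x \<subseteq> {size E | E. val E = x}"
  proof
    fix l assume "l \<in> lengths (Sr rr) x"
    then obtain F where F: "set_mset F \<subseteq> range (\<lambda>n. rr^n)" "sum_mset F = x" "l = size F"
      unfolding lengths_def factorizations_def atoms_eq by auto
    then obtain E where "F = image_mset (\<lambda>n. rr^n) E" using mset_from_range by blast
    then show "l \<in> {size E | E. val E = x}" using F unfolding val_def by auto
  qed
next
  show "{size E | E. val E = x} \<subseteq> lengths (Sr rr) x"
  proof
    fix l assume "l \<in> {size E | E. val E = x}"
    then obtain E where "val E = x" "l = size E" by auto
    then show "l \<in> lengths (Sr rr) x"
      unfolding lengths_def factorizations_def atoms_eq val_def
      by (intro image_eqI[of _ _ "image_mset (\<lambda>n. rr^n) E"]) auto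
  qed
qed

end


context geo begin

lemma exists_G0: "\<exists>G0. val G0 = of_nat (p^n) \<and> (\<forall>i. count G0 i < p) \<and> 1 \<le> size G0 \<and> size G0 \<le> q^n"
proof -
  have w: "val (replicate_mset (q^n) n) = of_nat (p^n)"
    using rr_q by (simp add: power_mult_distrib[symmetric] mult.commute)
  obtain G0 where G0: "val G0 = of_nat (p^n)" and mn: "\<forall>G. val G = of_nat (p^n) \<longrightarrow> size G0 \<le> size G"
    using ex_has_least_nat[of "\<lambda>G. val G = of_nat (p^n)" "replicate_mset (q^n) n" size, OF w] by blast
  have "size G0 \<le> q^n" using mn w by fastforce
  moreover have "G0 \<noteq> {#}" using G0 qp by auto
  then have "1 \<le> size G0" by (cases G0) auto
  moreover have "\<forall>i. count G0 i < p"
  proof (rule ccontr)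
    assume "\<not> (\<forall>i. count G0 i < p)"
    then obtain i where ci: "p \<le> count G0 i" by (auto simp: not_less)
    define R where "R = replicate_mset p i"
    have sub: "R \<subseteq># G0" unfolding R_def subseteq_mset_def using ci by simp
    define G' where "G' = (G0 - R) + replicate_mset q (Suc i)"
    have "G0 = (G0 - R) + R" using sub by simp
    then have "val G0 = val (G0 - R) + of_nat p * rr^i" unfolding R_def by (metis val_union val_replicate)
    moreover have "val G' = val (G0 - R) + of_nat q * rr^(Suc i)" unfolding G'_def by simp
    moreover have "of_nat q * rr^(Suc i) = of_nat p * rr^i" using rr_q by (simp add: mult_ac)
    ultimately have "val G' = of_nat (p^n)" using G0 by simp
    then have "size G0 \<le> size G'" using mn by blast
    moreover have "size G' = size (G0 - R) + q" unfolding G'_def by (simp only: size_union size_replicate_mset)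
    moreover have "size (G0 - R) = size G0 - p" using size_Diff_submset[OF sub] by (simp add: R_def)
    moreover have "p \<le> size G0" using size_Diff_submset[OF sub] ci
      by (metis R_def \<open>G0 = G0 - R + R\<close> le_add2 size_replicate_mset size_union)
    ultimately show False using qp by linarith
  qed
  ultimately show ?thesis using G0 by blast
qed

lemma key: "\<exists>m. 1 \<le> m \<and> m \<le> q^n \<and> (\<forall>t. real (p^n + t) / real (m + t) \<in> elasticity_set (Sr rr))"
proof -
  obtain G0 where G0: "val G0 = of_nat (p^n)" "\<forall>i. count G0 i < p" "1 \<le> size G0" "size G0 \<le> q^n"
    using exists_G0 by blast
  obtain K where K: "set_mset G0 \<subseteq> {..K}" using common_bound[of G0 G0] by blast
  have "real (p^n + t) / real (size G0 + t) \<in> elasticity_set (Sr rr)" for t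
  proof -
    define B where "B = mset_set {Suc K..K+t}"
    define Gmin where "Gmin = G0 + B"
    define Gmax where "Gmax = replicate_mset (p^n) 0 + B"
    define x where "x = val Gmax"
    have sB: "size B = t" unfolding B_def by simp
    have cB: "count B i \<le> 1" for i unfolding B_def by (cases "i \<in> {Suc K..K+t}") auto
    have cB0: "i \<le> K \<Longrightarrow> count B i = 0" for i unfolding B_def by simp
    have vmin: "val Gmin = x" unfolding Gmin_def x_def Gmax_def using G0(1) by simp
    have cmin: "\<forall>i. count Gmin i < p"
    proof
      fix i show "count Gmin i < p"
      proof (cases "i \<le> K")
        case True then show ?thesis using G0(2) cB0[of i] unfolding Gmin_def by simp
      next
        case False
        then have "i \<notin># G0" using K by auto
        then have "count G0 i = 0" by (simp add: not_in_iff)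
        then show ?thesis using cB[of i] qp q2 unfolding Gmin_def by simp
      qed
    qed
    have cBq: "count B i < q" for i using cB[of i] q2 by linarith
    have cmax: "\<forall>i. 1 \<le> i \<longrightarrow> count Gmax i < q"
      using cBq unfolding Gmax_def by simp
    have L: "lengths (Sr rr) x = {size E | E. val E = x}" by (rule lengths_eq)
    have sup: "Sup (lengths (Sr rr) x) = size Gmax"
      unfolding L by (rule cSup_eq_maximum) (use max_mset cmax x_def in auto)
    have inf: "Inf (lengths (Sr rr) x) = size Gmin"
      unfolding L by (rule cInf_eq_minimum) (use min_mset cmin vmin in auto)
    have "Gmax \<noteq> {#}" unfolding Gmax_def using qp by simp
    then have "1 \<le> x" unfolding x_def by (rule val_ge1)
    then have x0: "x \<noteq> 0" by auto
    have smax: "size Gmax = p^n + t" unfolding Gmax_def using sB by simp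
    have smin: "size Gmin = size G0 + t" unfolding Gmin_def using sB by simp
    have el: "elasticity (Sr rr) x = real (p^n + t) / real (size G0 + t)"
      unfolding elasticity_def using x0 by (simp only: if_False sup inf smax smin)
    have xS: "x \<in> Sr rr" unfolding x_def by (rule val_Sr)
    show ?thesis unfolding elasticity_set_def el[symmetric] using xS by (rule imageI)
  qed
  then show ?thesis using G0 by blast
qed

end

lemma approx:
  fixes y e :: real and M m :: nat
  assumes y1: "y > 1" and e0: "e > 0" and m1: "m \<ge> 1" and My: "real M > y * m"
    and big: "real M - m \<ge> (y-1)*((y-1)/e + 1)"
  shows "\<exists>t::nat. \<bar>real (M+t)/real(m+t) - y\<bar> < e"
proof -
  define Ds where "Ds = (real M - y * m) / (y - 1)"
  have Ds0: "Ds > 0" unfolding Ds_def using y1 My by simp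
  define t where "t = nat \<lfloor>Ds\<rfloor>"
  have t1: "real t \<le> Ds" "Ds < real t + 1" unfolding t_def using Ds0 by linarith+
  have mt: "real m + real t > 0" using m1 by simp
  have num: "(y-1)*(Ds - t) = real M + t - y*(m+t)" unfolding Ds_def using y1 by (simp add: field_simps)
  have "real (M+t)/real(m+t) - y = (real M + t - y*(m+t)) / (m + t)"
    using mt by (simp add: field_simps)
  then have eq: "real (M+t)/real(m+t) - y = (y-1) * (Ds - t) / (m + t)" using num by simp
  have "m + Ds = (real M - m) / (y - 1)" unfolding Ds_def using y1 by (simp add: field_simps)
  moreover have "(real M - m) / (y - 1) \<ge> (y-1)/e + 1" using big y1 by (simp add: field_simps mult.commute)
  ultimately have "m + t > (y-1)/e" using t1 by linarith
  then have "(y-1) < e * (m + t)" using e0 by (simp add: field_simps)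
  then have "(y-1)/(m+t) < e" using mt by (simp add: field_simps)
  moreover have "(y-1) * (Ds - t) / (m + t) \<le> (y-1)/(m+t)"
    using t1 y1 mt by (intro divide_right_mono) (auto simp: mult_le_cancel_left1)
  moreover have "(y-1) * (Ds - t) / (m + t) \<ge> 0" using t1 y1 mt by simp
  ultimately have "\<bar>real (M+t)/real(m+t) - y\<bar> < e" unfolding eq by linarith
  then show ?thesis by blast
qed


theorem proposition4p5:
  fixes r :: rat
  assumes "r > 1" and "r \<notin> \<nat>"
  shows "{y :: real. y \<ge> 1} \<subseteq> closure (elasticity_set (Sr r))"
proof -
  obtain a b where ab: "quotient_of r = (a, b)" by (cases "quotient_of r")
  have b0: "b > 0" using quotient_of_denom_pos[OF ab] .
  have cab: "coprime a b" using quotient_of_coprime[OF ab] .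
  have rab: "r = of_int a / of_int b" using quotient_of_div[OF ab] .
  have "of_int b < (of_int a :: rat)" using assms(1) rab b0 by (simp add: field_simps)
  then have ba: "b < a" by simp
  have b1: "b \<noteq> 1"
  proof
    assume "b = 1"
    then have "r = of_nat (nat a)" using rab ba b0 by simp
    then show False using assms(2) by (simp add: Nats_def)
  qed
  define p where "p = nat a"
  define q where "q = nat b"
  have ap: "a = int p" "b = int q" unfolding p_def q_def using ba b0 by auto
  have geo: "geo p q"
  proof
    show "coprime p q" using cab unfolding ap by simp
    show "2 \<le> q" using b0 b1 unfolding ap by simp
    show "q < p" using ba unfolding ap by simp
  qed
  have rr: "geo.rr p q = r" unfolding geo.rr_def[OF geo] rab ap by simp
  have q1: "1 \<le> q" and qp: "q < p" using geo unfolding geo_def by auto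
  show ?thesis
  proof
    fix y :: real assume "y \<in> {y. y \<ge> 1}"
    then have y1: "y \<ge> 1" by simp
    show "y \<in> closure (elasticity_set (Sr r))"
    proof (cases "y = 1")
      case True
      have "elasticity (Sr r) 0 = 1" unfolding elasticity_def by simp
      moreover have "(0::rat) \<in> Sr r" by (rule Sr.zero)
      ultimately have "y \<in> elasticity_set (Sr r)" unfolding elasticity_set_def True by (metis imageI)
      then show ?thesis using closure_subset by blast
    next
      case False
      then have y1: "y > 1" using y1 by simp
      show ?thesis unfolding closure_approachable
      proof (intro allI impI)
        fix e :: real assume e0: "e > 0"
        define bd where "bd = (y-1)*((y-1)/e + 1)"
        define R where "R = real p / real q"
        have R1: "1 < R" unfolding R_def using q1 qp by simp
        obtain n where n: "max y (bd + 1) < R^n" using real_arch_pow[OF R1] by blast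
        obtain m where m: "1 \<le> m" "m \<le> q^n"
          and mem: "\<forall>t. real (p^n + t) / real (m + t) \<in> elasticity_set (Sr (geo.rr p q))"
          using geo.key[OF geo, of n] by blast
        have Pn: "real (p^n) = R^n * real q ^ n" unfolding R_def using q1
          by (simp add: power_divide)
        have qn1: "1 \<le> real q ^ n" using q1 by simp
        have "y * m \<le> y * real q ^ n" using m y1 by simp
        also have "\<dots> < R^n * real q ^ n" using n qn1 q1 by (intro mult_strict_right_mono) auto
        finally have My: "real (p^n) > y * m" using Pn by simp
        have "real (p^n) - m \<ge> R^n * real q ^ n - real q ^ n" using Pn m by simp
        moreover have "R^n * real q ^ n - real q ^ n = (R^n - 1) * real q ^ n" by (simp add: algebra_simps)
        moreover have "(R^n - 1) * real q ^ n \<ge> (R^n - 1)"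
        proof -
          have "0 \<le> R^n - 1" using n y1 by simp
          then have "(R^n - 1) * 1 \<le> (R^n - 1) * real q ^ n" by (rule mult_left_mono[OF qn1])
          then show ?thesis by simp
        qed
        ultimately have big: "real (p^n) - m \<ge> bd" using n by linarith
        obtain t :: nat where t: "\<bar>real (p^n+t)/real(m+t) - y\<bar> < e"
          using approx[OF y1 e0 m(1) My big[unfolded bd_def]] by blast
        show "\<exists>z\<in>elasticity_set (Sr r). dist z y < e"
          using mem[rule_format, of t] t unfolding rr dist_real_def by blast
      qed
    qed
  qed
qed


end
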